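(* Let $q$ be a prime power with $q\equiv 1 \pmod 3$, and let $\pi,\sigma$ be vertices of the graph $C_A(q)$, with $\sigma(x)=ax+r$ and $\pi(x)=bx+s$ ($a,b\in GF(q)\setminus\{0\}$, $r,s\in GF(q)$). (a) If $a\neq b$, then $hd(\pi,\sigma)=q-1$. (b) If $\pi(F)=F$, then $\pi$ is an isolated vertex of $C_A(q)$. There are exactly $q-1$ elements $\pi\in AGL(1,q)$ with $\pi(F)=F$. (c) If $\pi$ and $\sigma$ are adjacent in $C_A(q)$, then $hd(\pi,\sigma)=q-1$, $hd(\pi^{\triangle},\sigma^{\triangle})=hd(\pi,\sigma)-3$, and $a/b$ and $b/a$ are the two distinct roots in $GF(q)$ of $t^2+t+1=0$.
   Context: $AGL(1,q)=\{x\mapsto ax+b: a\in GF(q)\setminus\{0\}, b\in GF(q)\}$, acting on $GF(q)$. For permutations $\pi,\sigma$ of a finite set, $hd(\pi,\sigma)$ is the number of points at which they differ. Fix a distinguished element $F\in GF(q)$. For a permutation $\pi$ of $GF(q)$, $\pi^{\triangle}$ is the permutation with $\pi^{\triangle}(\pi^{-1}(F))=\pi(F)$, $\pi^{\triangle}(F)=F$, and $\pi^{\triangle}(x)=\pi(x)$ otherwise. The contraction graph $C_A(q)$ has vertex set $AGL(1,q)$, with distinct $\pi,\sigma$ adjacent iff $hd(\pi^{\triangle},\sigma^{\triangle})=q-4$. *)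

theory Defs
  imports Main
begin

text \<open>GF(q) is modelled as a finite field type 'a with CARD('a) = q.\<close>

definition AGL :: "('a::{field,finite} \<Rightarrow> 'a) set" where
  "AGL = {f. \<exists>a b. a \<noteq> 0 \<and> f = (\<lambda>x. a * x + b)}"

definition hd :: "('a \<Rightarrow> 'b) \<Rightarrow> ('a \<Rightarrow> 'b) \<Rightarrow> nat" where
  "hd p s = card {x. p x \<noteq> s x}"

definition contr :: "'a \<Rightarrow> ('a \<Rightarrow> 'a) \<Rightarrow> ('a \<Rightarrow> 'a)" where
  "contr F p = (\<lambda>x. if x = F then F else if x = inv p F then p F else p x)"

definition CA_adj :: "'a::{field,finite} \<Rightarrow> ('a \<Rightarrow> 'a) \<Rightarrow> ('a \<Rightarrow> 'a) \<Rightarrow> bool" where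
  "CA_adj F p s \<longleftrightarrow> p \<in> AGL \<and> s \<in> AGL \<and> p \<noteq> s \<and>
     hd (contr F p) (contr F s) = card (UNIV :: 'a set) - 4"

end

theory Submission
  imports Defs "HOL-Number_Theory.Residues"
begin

lemma three_ne0:
  assumes "card (UNIV :: 'a::{field,finite} set) mod 3 = 1"
  shows "(3::'a) \<noteq> 0"
proof
  assume h: "(3::'a) = 0"
  have "of_nat 3 = (0::'a)" using h by simp
  hence "CHAR('a) dvd 3" by (simp only: of_nat_eq_0_iff_char_dvd)
  moreover have "CHAR('a) \<noteq> 1" using CHAR_not_1 by simp
  moreover have "CHAR('a) \<le> 3" using \<open>CHAR('a) dvd 3\<close> by (rule dvd_imp_le) simp
  ultimately have "CHAR('a) = 3"
    using \<open>CHAR('a) dvd 3\<close> proof -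
    have "CHAR('a) = 0 \<or> CHAR('a) = 1 \<or> CHAR('a) = 2 \<or> CHAR('a) = 3"
      using \<open>CHAR('a) \<le> 3\<close> by arith
    thus ?thesis using \<open>CHAR('a) dvd 3\<close> \<open>CHAR('a) \<noteq> 1\<close> by auto
  qed
  hence "3 dvd card (UNIV :: 'a set)" using CHAR_dvd_CARD by metis
  thus False using assms by auto
qed

lemma card_ge4:
  assumes "card (UNIV :: 'a::{field,finite} set) mod 3 = 1"
  shows "card (UNIV :: 'a set) \<ge> 4"
proof -
  have "card {0::'a, 1} \<le> card (UNIV :: 'a set)" by (rule card_mono) auto
  hence "card (UNIV :: 'a set) \<ge> 2" by simp
  with assms show ?thesis by presburger
qed

lemma inv_aff:
  fixes b s y :: "'a::field"
  assumes "b \<noteq> 0"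
  shows "inv_into UNIV (\<lambda>x. b * x + s) y = (y - s) / b"
proof -
  have inj: "inj (\<lambda>x. b * x + s)" using assms by (auto intro!: injI)
  have "(\<lambda>x. b * x + s) ((y - s) / b) = y" using assms by (simp add: field_simps)
  hence "inv_into UNIV (\<lambda>x. b * x + s) y = inv_into UNIV (\<lambda>x. b * x + s) ((\<lambda>x. b * x + s) ((y - s) / b))" by simp
  also have "\<dots> = (y - s) / b" using inv_f_f[OF inj] by blast
  finally show ?thesis .
qed

lemma hd_compl:
  fixes f g :: "'a::finite \<Rightarrow> 'b"
  shows "hd f g = card (UNIV :: 'a set) - card {x. f x = g x}"
proof -
  have "{x. f x \<noteq> g x} = UNIV - {x. f x = g x}" by auto
  thus ?thesis unfolding hd_def by (simp add: card_Diff_subset)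
qed

lemma agree_sub:
  "{x. contr F p x = contr F s x} \<subseteq> {F, inv_into UNIV p F, inv_into UNIV s F} \<union> {x. p x = s x}"
  unfolding contr_def by auto

lemma D_empty:
  fixes b s r :: "'a::field"
  assumes "r \<noteq> s"
  shows "{x. b * x + s = b * x + r} = {}"
  using assms by auto

lemma D_single:
  fixes a b s r :: "'a::field"
  assumes "a \<noteq> b"
  shows "{x. b * x + s = a * x + r} = {(r - s) / (b - a)}"
proof -
  have "b - a \<noteq> 0" using assms by simp
  hence "b * x + s = a * x + r \<longleftrightarrow> x = (r - s) / (b - a)" for x
    by (auto simp: field_simps)
  thus ?thesis by auto
qed

lemma hd_aff_diff:
  fixes a b s r :: "'a::{field,finite}"
  assumes "a \<noteq> b"
  shows "hd (\<lambda>x. b * x + s) (\<lambda>x. a * x + r) = card (UNIV :: 'a set) - 1"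
  unfolding hd_compl using D_single[OF assms, of s r] by simp

lemma card_D_le1:
  fixes a b s r :: "'a::{field,finite}"
  assumes "(\<lambda>x. b * x + s) \<noteq> (\<lambda>x. a * x + r)"
  shows "card {x. b * x + s = a * x + r} \<le> 1"
proof (cases "a = b")
  case True
  hence "r \<noteq> s" using assms by auto
  thus ?thesis using True D_empty by simp
next
  case False
  thus ?thesis using D_single[OF False] by simp
qed

lemma fix_card:
  "card {p \<in> (AGL :: ('a::{field,finite} \<Rightarrow> 'a) set). p F = F} = card (UNIV :: 'a set) - 1"
proof -
  define h where "h = (\<lambda>a::'a. \<lambda>x. a * x + (F - a * F))"
  have "{p \<in> AGL. p F = F} = h ` (UNIV - {0})"
  proof
    show "{p \<in> AGL. p F = F} \<subseteq> h ` (UNIV - {0})"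
    proof
      fix p assume "p \<in> {p \<in> AGL. p F = F}"
      then obtain a b where ab: "a \<noteq> 0" "p = (\<lambda>x. a * x + b)" "p F = F"
        unfolding AGL_def by auto
      hence "b = F - a * F" by (simp add: algebra_simps)
      thus "p \<in> h ` (UNIV - {0})" using ab unfolding h_def by auto
    qed
    show "h ` (UNIV - {0}) \<subseteq> {p \<in> AGL. p F = F}"
      unfolding h_def AGL_def by auto
  qed
  moreover have "inj_on h (UNIV - {0})"
  proof (rule inj_onI)
    fix a c assume "h a = h c"
    hence "h a (F + 1) = h c (F + 1)" by simp
    thus "a = c" unfolding h_def by (simp add: algebra_simps)
  qed
  ultimately show ?thesis by (simp add: card_image card_Diff_singleton)
qed



lemma agree_card:
  fixes F :: "'a::{field,finite}"
  assumes "hd (contr F p) (contr F t) = card (UNIV :: 'a set) - 4"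
    and "card (UNIV :: 'a set) \<ge> 4"
  shows "card {x. contr F p x = contr F t x} = 4"
proof -
  have "card {x. contr F p x = contr F t x} \<le> card (UNIV :: 'a set)" by (rule card_mono) auto
  thus ?thesis using assms unfolding hd_compl by linarith
qed

lemma isolated:
  fixes F b s c d :: "'a::{field,finite}"
  assumes b0: "b \<noteq> 0" and c0: "c \<noteq> 0" and q4: "card (UNIV :: 'a set) \<ge> 4"
    and hfix: "b * F + s = F"
    and ne: "(\<lambda>x. b * x + s) \<noteq> (\<lambda>x. c * x + d)"
    and h: "hd (contr F (\<lambda>x. b * x + s)) (contr F (\<lambda>x. c * x + d)) = card (UNIV :: 'a set) - 4"
  shows False
proof -
  let ?E = "{x. contr F (\<lambda>x. b * x + s) x = contr F (\<lambda>x. c * x + d) x}"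
  let ?D = "{x. b * x + s = c * x + d}"
  have E4: "card ?E = 4" by (rule agree_card[OF h q4])
  have "(F - s) / b = F" using hfix b0 by (simp add: field_simps)
  hence "?E \<subseteq> {F, (F - d) / c} \<union> ?D"
    using agree_sub[of F "\<lambda>x. b * x + s" "\<lambda>x. c * x + d"] inv_aff[OF b0] inv_aff[OF c0] by auto
  hence "card ?E \<le> card ({F, (F - d) / c} \<union> ?D)" by (intro card_mono) auto
  also have "\<dots> \<le> card {F, (F - d) / c} + card ?D" by (rule card_Un_le)
  also have "\<dots> \<le> 2 + 1" using card_D_le1[OF ne] by (intro add_mono) (auto simp: card_insert_if)
  finally show False using E4 by simp
qed

lemma adj_cond:
  fixes F a b r s :: "'a::{field,finite}"
  assumes a0: "a \<noteq> 0" and b0: "b \<noteq> 0" and q4: "card (UNIV :: 'a set) \<ge> 4"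
    and ne: "(\<lambda>x. b * x + s) \<noteq> (\<lambda>x. a * x + r)"
    and h: "hd (contr F (\<lambda>x. b * x + s)) (contr F (\<lambda>x. a * x + r)) = card (UNIV :: 'a set) - 4"
  shows "a \<noteq> b \<and> b * F + s = a * ((F - s) / b) + r \<and> b * ((F - r) / a) + s = a * F + r
     \<and> (F - s) / b \<noteq> F"
proof -
  let ?E = "{x. contr F (\<lambda>x. b * x + s) x = contr F (\<lambda>x. a * x + r) x}"
  let ?D = "{x. b * x + s = a * x + r}"
  define Gp where "Gp = (F - s) / b"
  define Gs where "Gs = (F - r) / a"
  have E4: "card ?E = 4" by (rule agree_card[OF h q4])
  have sub: "?E \<subseteq> {F, Gp, Gs} \<union> ?D"
    using agree_sub[of F "\<lambda>x. b * x + s" "\<lambda>x. a * x + r"] inv_aff[OF b0] inv_aff[OF a0]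
    unfolding Gp_def Gs_def by auto
  have ab: "a \<noteq> b"
  proof
    assume "a = b"
    hence "r \<noteq> s" using ne by auto
    hence "?D = {}" using \<open>a = b\<close> by auto
    hence "card ?E \<le> card {F, Gp, Gs}" using sub by (intro card_mono) auto
    also have "\<dots> \<le> 3" by (auto simp: card_insert_if)
    finally show False using E4 by simp
  qed
  define P where "P = (r - s) / (b - a)"
  have "?D = {P}" unfolding P_def by (rule D_single[OF ab])
  hence sub2: "?E \<subseteq> {F, Gp, Gs, P}" using sub by auto
  have "card {F, Gp, Gs, P} \<le> 4" by (auto simp: card_insert_if)
  hence "card {F, Gp, Gs, P} = 4" using card_mono[OF _ sub2] E4 by simp
  hence dist: "F \<noteq> Gp" "F \<noteq> Gs" "Gp \<noteq> Gs"
    by (auto simp: card_insert_if split: if_splits)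
  have "?E = {F, Gp, Gs, P}" using card_subset_eq[OF _ sub2] E4 \<open>card {F, Gp, Gs, P} = 4\<close> by simp
  hence "Gp \<in> ?E" "Gs \<in> ?E" by auto
  hence e1: "b * F + s = a * Gp + r" and e2: "b * Gs + s = a * F + r"
    using dist inv_aff[OF b0, of s F] inv_aff[OF a0, of r F]
    unfolding contr_def Gp_def[symmetric] Gs_def[symmetric] by auto
  show ?thesis using ab e1 e2 dist unfolding Gp_def Gs_def by auto
qed

lemma alg:
  fixes F a b r s :: "'a::field"
  assumes a0: "a \<noteq> 0" and b0: "b \<noteq> 0"
    and e1: "b * F + s = a * ((F - s) / b) + r" and e2: "b * ((F - r) / a) + s = a * F + r"
    and n: "(F - s) / b \<noteq> F"
  shows "(a / b)^2 + a / b + 1 = 0"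
proof -
  define t where "t = a / b"
  define \<alpha> where "\<alpha> = b * F + s - F"
  define \<beta> where "\<beta> = a * F + r - F"
  have t0: "t \<noteq> 0" using a0 b0 unfolding t_def by simp
  have an: "\<alpha> \<noteq> 0" using n b0 unfolding \<alpha>_def by (auto simp: field_simps)
  have h1: "\<beta> = \<alpha> * (1 + t)"
    using e1 b0 unfolding \<alpha>_def \<beta>_def t_def by (simp add: field_simps)
  have k: "\<beta> / t = b * F - b * ((F - r) / a)" unfolding \<beta>_def t_def using a0 b0 by (simp add: field_simps)
  have "\<beta> * (1 + 1/t) = \<beta> + \<beta> / t" by (simp add: algebra_simps)
  also have "\<dots> = \<beta> + b * F - b * ((F - r) / a)" using k by simp
  also have "\<dots> = \<beta> + b * F - (a * F + r - s)" using e2 by (simp add: algebra_simps)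
  also have "\<dots> = \<alpha>" unfolding \<alpha>_def \<beta>_def by (simp add: algebra_simps)
  finally have h2: "\<alpha> = \<beta> * (1 + 1 / t)" by simp
  have h3: "\<alpha> = \<alpha> * (1 + t) * (1 + 1 / t)" using h2 unfolding h1 .
  have "\<alpha> * 1 = \<alpha> * ((1 + t) * (1 + 1 / t))" using h3 by (metis mult.assoc mult_1_right)
  hence "(1 + t) * (1 + 1 / t) = 1" using an by (metis mult_left_cancel mult_1_right)
  hence "(1 + t) * (t + 1) = t" using t0 by (simp add: field_simps)
  hence "t^2 + t + 1 = 0" by (simp add: algebra_simps power2_eq_square)
  thus ?thesis unfolding t_def .
qed

theorem lemma4:
  fixes F a b r s :: "'a::{field,finite}"
  assumes q_mod: "card (UNIV :: 'a set) mod 3 = 1"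
    and a0: "a \<noteq> 0" and b0: "b \<noteq> 0"
  defines "\<sigma> \<equiv> (\<lambda>x. a * x + r)" and "\<pi> \<equiv> (\<lambda>x. b * x + s)"
  shows "(a \<noteq> b \<longrightarrow> hd \<pi> \<sigma> = card (UNIV :: 'a set) - 1)
    \<and> (\<pi> F = F \<longrightarrow> (\<forall>\<tau>\<in>AGL. \<not> CA_adj F \<pi> \<tau>))
    \<and> card {p \<in> AGL. p F = F} = card (UNIV :: 'a set) - 1
    \<and> (CA_adj F \<pi> \<sigma> \<longrightarrow>
         hd \<pi> \<sigma> = card (UNIV :: 'a set) - 1
       \<and> hd (contr F \<pi>) (contr F \<sigma>) = hd \<pi> \<sigma> - 3
       \<and> a / b \<noteq> b / a
       \<and> (a / b)^2 + a / b + 1 = 0 \<and> (b / a)^2 + b / a + 1 = 0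
       \<and> (\<forall>t. t^2 + t + 1 = 0 \<longrightarrow> t = a / b \<or> t = b / a))"
proof (intro conjI impI)
  have q4: "card (UNIV :: 'a set) \<ge> 4" by (rule card_ge4[OF q_mod])
  show "a \<noteq> b \<Longrightarrow> hd \<pi> \<sigma> = card (UNIV :: 'a set) - 1"
    unfolding \<pi>_def \<sigma>_def by (rule hd_aff_diff)
  show "\<forall>\<tau>\<in>AGL. \<not> CA_adj F \<pi> \<tau>" if "\<pi> F = F"
  proof (intro ballI notI)
    fix \<tau> assume "\<tau> \<in> AGL" "CA_adj F \<pi> \<tau>"
    then obtain c d where cd: "c \<noteq> 0" "\<tau> = (\<lambda>x. c * x + d)" unfolding AGL_def by auto
    show False
      using isolated[OF b0 cd(1) q4, of F s d] that \<open>CA_adj F \<pi> \<tau>\<close> cd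
      unfolding CA_adj_def \<pi>_def by auto
  qed
  show "card {p \<in> AGL. p F = F} = card (UNIV :: 'a set) - 1" by (rule fix_card)
  assume adj: "CA_adj F \<pi> \<sigma>"
  have c: "a \<noteq> b \<and> b * F + s = a * ((F - s) / b) + r \<and> b * ((F - r) / a) + s = a * F + r
     \<and> (F - s) / b \<noteq> F"
    using adj_cond[OF a0 b0 q4, of s r F] adj unfolding CA_adj_def \<pi>_def \<sigma>_def by auto
  have hq: "hd \<pi> \<sigma> = card (UNIV :: 'a set) - 1"
    unfolding \<pi>_def \<sigma>_def using c by (intro hd_aff_diff) auto
  thus "hd \<pi> \<sigma> = card (UNIV :: 'a set) - 1" .
  show "hd (contr F \<pi>) (contr F \<sigma>) = hd \<pi> \<sigma> - 3"
    using adj hq q4 unfolding CA_adj_def by simp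
  have r1: "(a / b)^2 + a / b + 1 = 0" using alg[OF a0 b0] c by blast
  thus "(a / b)^2 + a / b + 1 = 0" .
  have inv: "b / a = 1 / (a / b)" by simp
  have ab0: "a / b \<noteq> 0" using a0 b0 by simp
  show r2: "(b / a)^2 + b / a + 1 = 0"
    unfolding inv using r1 ab0 by (simp add: field_simps power2_eq_square)
  have three: "(3::'a) \<noteq> 0" by (rule three_ne0[OF q_mod])
  show "a / b \<noteq> b / a"
  proof
    assume "a / b = b / a"
    hence "(a / b)^2 = 1" using ab0 by (simp add: power2_eq_square field_simps)
    hence "1 + a / b + 1 = 0" using r1 by simp
    moreover have "a / b = (1 + a / b + 1) - 2" by simp
    ultimately have "a / b = - 2" by simp
    hence "(-2::'a)^2 = 1" using \<open>(a / b)^2 = 1\<close> by simp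
    hence h4: "(4::'a) = 1" by (simp add: power2_eq_square)
    have "(3::'a) = 4 - 1" by simp
    also have "\<dots> = 0" using h4 by simp
    finally have "(3::'a) = 0" .
    thus False using three by simp
  qed
  show "\<forall>t. t^2 + t + 1 = 0 \<longrightarrow> t = a / b \<or> t = b / a"
  proof (intro allI impI)
    fix t :: 'a assume ht: "t^2 + t + 1 = 0"
    define u where "u = a / b"
    have hu: "u^2 + u + 1 = 0" using r1 unfolding u_def .
    have "(t^2 + t + 1) - (u^2 + u + 1) = 0" using ht hu by simp
    moreover have "(t - u) * (t + u + 1) = (t^2 + t + 1) - (u^2 + u + 1)" by (simp add: algebra_simps power2_eq_square)
    ultimately have "(t - u) * (t + u + 1) = 0" by simp
    hence "t - u = 0 \<or> t + u + 1 = 0" by simp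
    moreover have "t = - u - 1" if h: "t + u + 1 = 0"
    proof -
      have "t = (t + u + 1) - u - 1" by simp
      also have "\<dots> = - u - 1" using h by simp
      finally show ?thesis .
    qed
    ultimately have "t = u \<or> t = - u - 1" by auto
    moreover have "- u - 1 = b / a"
    proof -
      have "u \<noteq> 0" using ab0 unfolding u_def .
      have "u * (- u - 1) = 1 - (u^2 + u + 1)" by (simp add: algebra_simps power2_eq_square)
      hence "u * (- u - 1) = 1" using hu by simp
      hence "- u - 1 = 1 / u" using \<open>u \<noteq> 0\<close> by (simp add: field_simps)
      thus ?thesis unfolding u_def by simp
    qed
    ultimately show "t = a / b \<or> t = b / a" unfolding u_def by auto
  qed
qed

end
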